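(* Let $D=\mathbb S^{d-1}$ and consider the fully connected network $f^1(x)=W^0Vx$, $f^{\ell+1}(x)=W^\ell m_\ell^{-1/2}\sigma(f^\ell(x))$ for $\ell=1,\dots,L$, with scalar output $f^{L+1}$ (so $m_{L+1}=1$), where $V\in\mathbb R^{m_0\times d}$ satisfies $V^TV=I$, $W^\ell\in\mathbb R^{m_{\ell+1}\times m_\ell}$, the last-layer weights $W^L$ have entries in $\{-1,+1\}$, and only $\theta=W^{L-1}$ is trained. Assume the activation (which may differ from layer to layer) satisfies $|\sigma(x)|\lesssim|x|$ and $|\sigma(x)-\sigma(\bar x)|\lesssim|x-\bar x|$, that $m_L\sim m_{L-1}\sim\dots\sim m_0$, and that the gradient descent iterates (for the loss $\ell(\theta)=\frac12\|f^{L+1}-f\|_{L_2(D)}^2$ with target $f$ and step $\theta^{k+1}=\theta^k-\gamma\nabla_\theta\ell(\theta^k)$) satisfy $\|W^\ell(n)\|m_\ell^{-1/2}\lesssim1$. Then, with $\kappa^n=f^{L+1}_{\theta^n}-f$, $$\|\nabla_\theta\ell(\theta^n)\|\lesssim\|\kappa^n\|_{L_2(D)}.$$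
   Context: $\|\cdot\|$ denotes the spectral norm of a matrix; $W^\ell(n)$ denotes the layer-$\ell$ weights after $n$ gradient descent steps. $a\lesssim b$ (and $\sim$) means inequality up to constants independent of the widths (possibly depending on $L$ and $d$). *)

theory Defs
  imports "HOL-Analysis.Analysis"
begin

text \<open>Matrices of varying size are represented as functions nat => nat => real;
  only the entries with indices inside the stated dimensions are ever used.\<close>

definition vnorm :: "nat \<Rightarrow> (nat \<Rightarrow> real) \<Rightarrow> real" where
  "vnorm n v = sqrt (\<Sum>j<n. (v j)\<^sup>2)"

definition spec_norm :: "nat \<Rightarrow> nat \<Rightarrow> (nat \<Rightarrow> nat \<Rightarrow> real) \<Rightarrow> real" where
  "spec_norm r s A = Sup {vnorm r (\<lambda>i. \<Sum>j<s. A i j * v j) | v. vnorm s v \<le> 1}"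

text \<open>Uniform probability measure on the unit sphere S^(d-1) in R^d
  (push-forward of the uniform measure on the unit ball under radial projection).\<close>
definition sphere_measure :: "(real ^ 'd) measure" where
  "sphere_measure = distr (uniform_measure lborel (ball 0 1)) borel (\<lambda>x. x /\<^sub>R norm x)"

definition L2norm :: "(real ^ 'd \<Rightarrow> real) \<Rightarrow> real" where
  "L2norm g = sqrt (\<integral>x. (g x)\<^sup>2 \<partial>(sphere_measure :: (real ^ 'd) measure))"

text \<open>The fully connected network.  net m \<sigma> W V 0 x = V x (width m 0),
  net ... 1 x = W^0 V x = f^1(x), and
  net ... (l+1) x = W^l m_l^(-1/2) \<sigma>_l(f^l(x)) = f^(l+1)(x) for l \<ge> 1.\<close>
fun net :: "(nat \<Rightarrow> nat) \<Rightarrow> (nat \<Rightarrow> real \<Rightarrow> real) \<Rightarrow> (nat \<Rightarrow> nat \<Rightarrow> nat \<Rightarrow> real)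
    \<Rightarrow> (nat \<Rightarrow> 'd::finite \<Rightarrow> real) \<Rightarrow> nat \<Rightarrow> real ^ 'd \<Rightarrow> nat \<Rightarrow> real" where
  "net m \<sigma> W V 0 x = (\<lambda>i. \<Sum>k\<in>UNIV. V i k * x $ k)"
| "net m \<sigma> W V (Suc 0) x = (\<lambda>i. \<Sum>j<m 0. W 0 i j * net m \<sigma> W V 0 x j)"
| "net m \<sigma> W V (Suc (Suc l)) x =
     (\<lambda>i. \<Sum>j<m (Suc l). W (Suc l) i j * \<sigma> (Suc l) (net m \<sigma> W V (Suc l) x j) / sqrt (real (m (Suc l))))"

definition net_out :: "(nat \<Rightarrow> nat) \<Rightarrow> (nat \<Rightarrow> real \<Rightarrow> real) \<Rightarrow> (nat \<Rightarrow> nat \<Rightarrow> nat \<Rightarrow> real)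
    \<Rightarrow> (nat \<Rightarrow> 'd::finite \<Rightarrow> real) \<Rightarrow> nat \<Rightarrow> (nat \<Rightarrow> nat \<Rightarrow> real) \<Rightarrow> real ^ 'd \<Rightarrow> real" where
  "net_out m \<sigma> W V L \<theta> x = net m \<sigma> (W(L - 1 := \<theta>)) V (Suc L) x 0"

definition loss :: "(nat \<Rightarrow> nat) \<Rightarrow> (nat \<Rightarrow> real \<Rightarrow> real) \<Rightarrow> (nat \<Rightarrow> nat \<Rightarrow> nat \<Rightarrow> real)
    \<Rightarrow> (nat \<Rightarrow> 'd::finite \<Rightarrow> real) \<Rightarrow> nat \<Rightarrow> (real ^ 'd \<Rightarrow> real) \<Rightarrow> (nat \<Rightarrow> nat \<Rightarrow> real) \<Rightarrow> real" where
  "loss m \<sigma> W V L f \<theta> = 1/2 * (L2norm (\<lambda>x. net_out m \<sigma> W V L \<theta> x - f x))\<^sup>2"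

definition is_gradient :: "(nat \<Rightarrow> nat) \<Rightarrow> (nat \<Rightarrow> real \<Rightarrow> real) \<Rightarrow> (nat \<Rightarrow> nat \<Rightarrow> nat \<Rightarrow> real)
    \<Rightarrow> (nat \<Rightarrow> 'd::finite \<Rightarrow> real) \<Rightarrow> nat \<Rightarrow> (real ^ 'd \<Rightarrow> real) \<Rightarrow> (nat \<Rightarrow> nat \<Rightarrow> real)
    \<Rightarrow> (nat \<Rightarrow> nat \<Rightarrow> real) \<Rightarrow> bool" where
  "is_gradient m \<sigma> W V L f \<theta> G \<longleftrightarrow>
     (\<forall>H. ((\<lambda>t. loss m \<sigma> W V L f (\<lambda>i j. \<theta> i j + t * H i j)) has_real_derivative
             (\<Sum>i<m L. \<Sum>j<m (L - 1). G i j * H i j)) (at 0))"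

end

theory Submission
  imports Defs "HOL-Probability.Probability"
begin


lemma vnorm_L2: "vnorm n v = L2_set v {..<n}" by (simp add: vnorm_def L2_set_def)
lemma vnorm_nonneg: "0 \<le> vnorm n v" by (simp add: vnorm_def sum_nonneg)
lemma vnorm_sq: "(vnorm n v)\<^sup>2 = (\<Sum>j<n. (v j)\<^sup>2)" by (simp add: vnorm_def sum_nonneg)

lemma vnorm_scale: "vnorm n (\<lambda>i. c * w i) = \<bar>c\<bar> * vnorm n w"
  by (simp add: vnorm_def power_mult_distrib sum_distrib_left[symmetric] real_sqrt_mult)

lemma vnorm_cong: "(\<And>i. i < n \<Longrightarrow> v i = w i) \<Longrightarrow> vnorm n v = vnorm n w"
  by (simp add: vnorm_def)

lemma vnorm_div: "c > 0 \<Longrightarrow> vnorm n (\<lambda>i. w i / c) = vnorm n w / c"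
  using vnorm_scale[of n "1/c" w] by simp

lemma CS: "\<bar>\<Sum>j<n. a j * b j\<bar> \<le> vnorm n a * vnorm n b"
proof -
  have "\<bar>\<Sum>j<n. a j * b j\<bar> \<le> (\<Sum>j<n. \<bar>a j\<bar> * \<bar>b j\<bar>)"
    by (metis (no_types, lifting) abs_mult sum.cong sum_abs)
  also have "\<dots> \<le> vnorm n a * vnorm n b" unfolding vnorm_L2 by (rule L2_set_mult_ineq)
  finally show ?thesis .
qed

lemma sum_abs_le: "(\<Sum>j<n. \<bar>a j\<bar>) \<le> sqrt (real n) * vnorm n a"
proof -
  have "(\<Sum>j<n. \<bar>a j\<bar>) = \<bar>\<Sum>j<n. 1 * \<bar>a j\<bar>\<bar>" by (simp add: sum_nonneg)
  also have "\<dots> \<le> vnorm n (\<lambda>_. 1) * vnorm n (\<lambda>j. \<bar>a j\<bar>)" by (rule CS)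
  also have "vnorm n (\<lambda>_. 1) = sqrt (real n)" by (simp add: vnorm_def)
  also have "vnorm n (\<lambda>j. \<bar>a j\<bar>) = vnorm n a" by (simp add: vnorm_def)
  finally show ?thesis .
qed

lemma vnorm_zero: assumes "vnorm n v = 0" "i < n" shows "v i = 0"
proof -
  have "(\<Sum>j<n. (v j)\<^sup>2) = 0" using assms(1) by (simp add: vnorm_def)
  then have "\<forall>j\<in>{..<n}. (v j)\<^sup>2 = 0" by (subst (asm) sum_nonneg_eq_0_iff) auto
  then show ?thesis using assms(2) by auto
qed

lemma vnorm_le_sq: "(\<And>i. i < n \<Longrightarrow> (v i)\<^sup>2 \<le> (w i)\<^sup>2) \<Longrightarrow> vnorm n v \<le> vnorm n w"
  unfolding vnorm_def by (intro real_sqrt_le_mono sum_mono) auto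

lemma matvec_bound:
  "vnorm r (\<lambda>i. \<Sum>j<s. A i j * v j) \<le> sqrt (\<Sum>i<r. (vnorm s (A i))\<^sup>2) * vnorm s v"
proof -
  have "vnorm r (\<lambda>i. \<Sum>j<s. A i j * v j) \<le> vnorm r (\<lambda>i. vnorm s (A i) * vnorm s v)"
  proof (rule vnorm_le_sq)
    fix i
    have "\<bar>\<Sum>j<s. A i j * v j\<bar> \<le> \<bar>vnorm s (A i) * vnorm s v\<bar>"
      using CS[where n=s and a="A i" and b=v] by (simp add: vnorm_nonneg)
    then show "(\<Sum>j<s. A i j * v j)\<^sup>2 \<le> (vnorm s (A i) * vnorm s v)\<^sup>2"
      using abs_le_square_iff by blast
  qed
  also have "\<dots> = vnorm s v * vnorm r (\<lambda>i. vnorm s (A i))"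
    using vnorm_scale[of r "vnorm s v" "\<lambda>i. vnorm s (A i)"] by (simp add: vnorm_nonneg mult.commute)
  also have "vnorm r (\<lambda>i. vnorm s (A i)) = sqrt (\<Sum>i<r. (vnorm s (A i))\<^sup>2)" by (simp add: vnorm_def)
  finally show ?thesis by (simp add: mult.commute)
qed

lemma spec_bdd: "bdd_above {vnorm r (\<lambda>i. \<Sum>j<s. A i j * v j) | v. vnorm s v \<le> 1}"
proof (rule bdd_aboveI)
  fix y assume "y \<in> {vnorm r (\<lambda>i. \<Sum>j<s. A i j * v j) | v. vnorm s v \<le> 1}"
  then obtain v where v: "vnorm s v \<le> 1" "y = vnorm r (\<lambda>i. \<Sum>j<s. A i j * v j)" by auto
  have "y \<le> sqrt (\<Sum>i<r. (vnorm s (A i))\<^sup>2) * vnorm s v" using v matvec_bound by metis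
  also have "\<dots> \<le> sqrt (\<Sum>i<r. (vnorm s (A i))\<^sup>2)"
    using v(1) by (intro mult_left_le) (auto simp: sum_nonneg)
  finally show "y \<le> sqrt (\<Sum>i<r. (vnorm s (A i))\<^sup>2)" .
qed

lemma spec_ge: "vnorm s v \<le> 1 \<Longrightarrow> vnorm r (\<lambda>i. \<Sum>j<s. A i j * v j) \<le> spec_norm r s A"
  unfolding spec_norm_def by (rule cSup_upper[OF _ spec_bdd]) auto

lemma spec_nonneg: "0 \<le> spec_norm r s A"
  using spec_ge[of s "\<lambda>_. 0" r A] by (simp add: vnorm_def)

lemma spec_mult: "vnorm r (\<lambda>i. \<Sum>j<s. A i j * v j) \<le> spec_norm r s A * vnorm s v"
proof (cases "vnorm s v = 0")
  case True
  then have "vnorm r (\<lambda>i. \<Sum>j<s. A i j * v j) = 0"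
    using vnorm_zero[OF True] by (simp add: vnorm_def)
  then show ?thesis using True by simp
next
  case False
  define c where "c = vnorm s v"
  have c: "c > 0" using False vnorm_nonneg c_def by (metis less_eq_real_def)
  have "vnorm s (\<lambda>j. (1/c) * v j) = 1" using c vnorm_scale[of s "1/c" v] by (simp add: c_def)
  then have "vnorm r (\<lambda>i. \<Sum>j<s. A i j * ((1/c) * v j)) \<le> spec_norm r s A" by (intro spec_ge) simp
  moreover have "(\<lambda>i. \<Sum>j<s. A i j * ((1/c) * v j)) = (\<lambda>i. (1/c) * (\<Sum>j<s. A i j * v j))"
    by (simp add: sum_distrib_left algebra_simps)
  ultimately have "vnorm r (\<lambda>i. \<Sum>j<s. A i j * v j) / c \<le> spec_norm r s A"
    using c vnorm_div[of c r "\<lambda>i. \<Sum>j<s. A i j * v j"] by simp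
  then show ?thesis using c unfolding c_def[symmetric] by (simp add: pos_divide_le_eq)
qed

lemma spec_least: "(\<And>v. vnorm s v \<le> 1 \<Longrightarrow> vnorm r (\<lambda>i. \<Sum>j<s. A i j * v j) \<le> b) \<Longrightarrow> spec_norm r s A \<le> b"
  unfolding spec_norm_def
proof (rule cSup_least)
  show "{vnorm r (\<lambda>i. \<Sum>j<s. A i j * v j) | v. vnorm s v \<le> 1} \<noteq> {}"
  proof -
    have "vnorm s (\<lambda>_. 0) \<le> 1" by (simp add: vnorm_def)
    then show ?thesis by blast
  qed
qed auto



lemma abs_le_sq1: "\<bar>z::real\<bar> \<le> 1 + z\<^sup>2"
proof (cases "\<bar>z\<bar> \<le> 1")
  case True then show ?thesis by (simp add: add_increasing2)
next
  case False
  then have "\<bar>z\<bar> * 1 \<le> \<bar>z\<bar> * \<bar>z\<bar>" by (intro mult_left_mono) auto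
  then show ?thesis by (simp add: power2_eq_square abs_mult_self_eq)
qed

lemma deriv_bound:
  fixes F :: "real \<Rightarrow> 'a \<Rightarrow> real"
  assumes P: "prob_space M"
    and meas: "\<And>t. F t \<in> borel_measurable M"
    and int: "\<And>t. integrable M (\<lambda>x. (F t x)\<^sup>2)"
    and lip: "\<And>t. AE x in M. \<bar>F t x - F 0 x\<bar> \<le> \<bar>t\<bar> * Mc"
    and Mc: "0 \<le> Mc"
    and D: "((\<lambda>t. 1/2 * (sqrt (\<integral>x. (F t x)\<^sup>2 \<partial>M))\<^sup>2) has_real_derivative D) (at 0)"
  shows "\<bar>D\<bar> \<le> Mc * sqrt (\<integral>x. (F 0 x)\<^sup>2 \<partial>M)"
proof -
  interpret prob_space M by (rule P)
  have intabs: "integrable M (\<lambda>x. \<bar>F t x\<bar>)" for t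
  proof (rule Bochner_Integration.integrable_bound[where f="\<lambda>x. 1 + (F t x)\<^sup>2"])
    show "integrable M (\<lambda>x. 1 + (F t x)\<^sup>2)" using int by auto
    show "(\<lambda>x. \<bar>F t x\<bar>) \<in> borel_measurable M" using meas by auto
    show "AE x in M. norm \<bar>F t x\<bar> \<le> norm (1 + (F t x)\<^sup>2)"
    proof (rule AE_I2)
      fix x
      have "\<bar>F t x\<bar> \<le> 1 + (F t x)\<^sup>2" by (rule abs_le_sq1)
      then show "norm \<bar>F t x\<bar> \<le> norm (1 + (F t x)\<^sup>2)" by simp
    qed
  qed
  define E where "E = (\<integral>x. \<bar>F 0 x\<bar> \<partial>M)"
  define S where "S = (\<integral>x. (F 0 x)\<^sup>2 \<partial>M)"
  have E0: "0 \<le> E" unfolding E_def by (rule Bochner_Integration.integral_nonneg) auto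
  have "0 \<le> variance (\<lambda>x. \<bar>F 0 x\<bar>)" by (rule Bochner_Integration.integral_nonneg) auto
  also have "variance (\<lambda>x. \<bar>F 0 x\<bar>) = S - E\<^sup>2"
    unfolding E_def S_def by (subst variance_eq) (use intabs int in auto)
  finally have "E\<^sup>2 \<le> S" by simp
  then have ES: "E \<le> sqrt S" using E0 real_le_rsqrt by blast
  define \<phi> where "\<phi> t = 1/2 * (sqrt (\<integral>x. (F t x)\<^sup>2 \<partial>M))\<^sup>2" for t
  have phi: "\<phi> t = 1/2 * (\<integral>x. (F t x)\<^sup>2 \<partial>M)" for t
    unfolding \<phi>_def by (subst real_sqrt_pow2) (auto intro: Bochner_Integration.integral_nonneg)
  have diff: "\<bar>\<phi> t - \<phi> 0\<bar> \<le> \<bar>t\<bar> * Mc * E + (\<bar>t\<bar> * Mc)\<^sup>2 / 2" for t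
  proof -
    have pw: "AE x in M. \<bar>(F t x)\<^sup>2 - (F 0 x)\<^sup>2\<bar> \<le> \<bar>t\<bar> * Mc * (2 * \<bar>F 0 x\<bar> + \<bar>t\<bar> * Mc)"
      using lip[of t]
    proof (rule AE_mp, intro AE_I2 impI)
      fix x assume h: "\<bar>F t x - F 0 x\<bar> \<le> \<bar>t\<bar> * Mc"
      have "\<bar>(F t x)\<^sup>2 - (F 0 x)\<^sup>2\<bar> = \<bar>F t x - F 0 x\<bar> * \<bar>2 * F 0 x + (F t x - F 0 x)\<bar>"
        by (simp add: power2_eq_square abs_mult[symmetric] algebra_simps)
      also have "\<dots> \<le> \<bar>t\<bar> * Mc * (2 * \<bar>F 0 x\<bar> + \<bar>t\<bar> * Mc)"
        by (rule mult_mono) (use h in \<open>auto intro: order_trans[OF abs_triangle_ineq]\<close>)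
      finally show "\<bar>(F t x)\<^sup>2 - (F 0 x)\<^sup>2\<bar> \<le> \<bar>t\<bar> * Mc * (2 * \<bar>F 0 x\<bar> + \<bar>t\<bar> * Mc)" .
    qed
    have ib: "integrable M (\<lambda>x. \<bar>t\<bar> * Mc * (2 * \<bar>F 0 x\<bar> + \<bar>t\<bar> * Mc))"
      using intabs[of 0] by auto
    have id: "integrable M (\<lambda>x. (F t x)\<^sup>2 - (F 0 x)\<^sup>2)" using int by auto
    have "\<bar>\<integral>x. (F t x)\<^sup>2 - (F 0 x)\<^sup>2 \<partial>M\<bar> \<le> (\<integral>x. \<bar>t\<bar> * Mc * (2 * \<bar>F 0 x\<bar> + \<bar>t\<bar> * Mc) \<partial>M)"
    proof -
      have "(\<integral>x. (F t x)\<^sup>2 - (F 0 x)\<^sup>2 \<partial>M) \<le> (\<integral>x. \<bar>t\<bar> * Mc * (2 * \<bar>F 0 x\<bar> + \<bar>t\<bar> * Mc) \<partial>M)"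
        by (rule integral_mono_AE[OF id ib]) (use pw in \<open>auto elim!: AE_mp\<close>)
      moreover have "(\<integral>x. - ((F t x)\<^sup>2 - (F 0 x)\<^sup>2) \<partial>M) \<le> (\<integral>x. \<bar>t\<bar> * Mc * (2 * \<bar>F 0 x\<bar> + \<bar>t\<bar> * Mc) \<partial>M)"
        by (rule integral_mono_AE[OF integrable_minus[OF id] ib]) (use pw in \<open>auto elim!: AE_mp\<close>)
      moreover have "(\<integral>x. - ((F t x)\<^sup>2 - (F 0 x)\<^sup>2) \<partial>M) = - (\<integral>x. (F t x)\<^sup>2 - (F 0 x)\<^sup>2 \<partial>M)"
        by (rule integral_minus)
      ultimately show ?thesis by (simp only: abs_le_iff)
    qed
    also have "(\<integral>x. \<bar>t\<bar> * Mc * (2 * \<bar>F 0 x\<bar> + \<bar>t\<bar> * Mc) \<partial>M) = \<bar>t\<bar> * Mc * (2 * E + \<bar>t\<bar> * Mc)"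
      using intabs[of 0] by (simp add: E_def prob_space)
    finally have "\<bar>\<integral>x. (F t x)\<^sup>2 - (F 0 x)\<^sup>2 \<partial>M\<bar> \<le> \<bar>t\<bar> * Mc * (2 * E + \<bar>t\<bar> * Mc)" .
    moreover have "\<phi> t - \<phi> 0 = 1/2 * (\<integral>x. (F t x)\<^sup>2 - (F 0 x)\<^sup>2 \<partial>M)"
    proof -
      have e: "(\<integral>x. (F t x)\<^sup>2 - (F 0 x)\<^sup>2 \<partial>M) = (\<integral>x. (F t x)\<^sup>2 \<partial>M) - (\<integral>x. (F 0 x)\<^sup>2 \<partial>M)"
        by (rule Bochner_Integration.integral_diff[OF int int])
      show ?thesis unfolding phi e by (simp add: right_diff_distrib)
    qed
    ultimately show ?thesis by (simp add: algebra_simps power2_eq_square)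
  qed
  have lim1: "((\<lambda>t. \<bar>(\<phi> t - \<phi> 0) / (t - 0)\<bar>) \<longlongrightarrow> \<bar>D\<bar>) (at 0)"
    using D unfolding \<phi>_def[symmetric] has_field_derivative_iff by (intro tendsto_intros)
  have lim2: "((\<lambda>t. Mc * E + \<bar>t\<bar> * Mc\<^sup>2 / 2) \<longlongrightarrow> Mc * E + \<bar>0\<bar> * Mc\<^sup>2 / 2) (at (0::real))"
    by (intro tendsto_intros) auto
  have ev: "eventually (\<lambda>t. \<bar>(\<phi> t - \<phi> 0) / (t - 0)\<bar> \<le> Mc * E + \<bar>t\<bar> * Mc\<^sup>2 / 2) (at 0)"
    unfolding eventually_at_filter
  proof (intro always_eventually allI impI)
    fix t :: real assume "t \<noteq> 0"
    then have "\<bar>(\<phi> t - \<phi> 0) / (t - 0)\<bar> = \<bar>\<phi> t - \<phi> 0\<bar> / \<bar>t\<bar>" by (simp add: abs_divide)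
    also have "\<dots> \<le> (\<bar>t\<bar> * Mc * E + (\<bar>t\<bar> * Mc)\<^sup>2 / 2) / \<bar>t\<bar>"
      using diff[of t] \<open>t \<noteq> 0\<close> by (simp add: divide_right_mono)
    also have "\<dots> = Mc * E + \<bar>t\<bar> * Mc\<^sup>2 / 2" using \<open>t \<noteq> 0\<close> by (simp add: field_simps power2_eq_square)
    finally show "\<bar>(\<phi> t - \<phi> 0) / (t - 0)\<bar> \<le> Mc * E + \<bar>t\<bar> * Mc\<^sup>2 / 2" .
  qed
  have "\<bar>D\<bar> \<le> Mc * E + \<bar>0\<bar> * Mc\<^sup>2 / 2"
    by (rule tendsto_le[OF _ lim2 lim1 ev]) simp
  also have "\<dots> \<le> Mc * sqrt S" using ES Mc by (simp add: mult_left_mono)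
  finally show ?thesis unfolding S_def .
qed



lemma net_cong: "(\<forall>k<l. W k = W' k) \<Longrightarrow> net m \<sigma> W V l x = net m \<sigma> W' V l x"
  by (induction m \<sigma> W V l x rule: net.induct) auto

lemma net_V_norm:
  fixes V :: "nat \<Rightarrow> 'd::finite \<Rightarrow> real"
  assumes orth: "\<forall>k k'. (\<Sum>i<m 0. V i k * V i k') = (if k = k' then 1 else 0)"
  shows "vnorm (m 0) (net m \<sigma> W V 0 x) = norm x"
proof -
  have "(\<Sum>i<m 0. (\<Sum>k\<in>UNIV. V i k * x $ k)\<^sup>2) = (\<Sum>i<m 0. \<Sum>k\<in>UNIV. \<Sum>k'\<in>UNIV. (V i k * x $ k) * (V i k' * x $ k'))"
    by (simp add: power2_eq_square sum_product)
  also have "\<dots> = (\<Sum>k\<in>UNIV. \<Sum>k'\<in>UNIV. \<Sum>i<m 0. (V i k * x $ k) * (V i k' * x $ k'))"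
    by (subst sum.swap) (simp add: sum.swap[of _ "{..<m 0}"])
  also have "\<dots> = (\<Sum>k\<in>UNIV. \<Sum>k'\<in>UNIV. (x $ k * x $ k') * (\<Sum>i<m 0. V i k * V i k'))"
    by (simp add: sum_distrib_left algebra_simps)
  also have "\<dots> = (\<Sum>k\<in>UNIV. \<Sum>k'\<in>UNIV. (x $ k * x $ k') * (if k = k' then 1 else 0))"
    using orth by simp
  also have "\<dots> = (\<Sum>k\<in>UNIV. (x $ k)\<^sup>2)"
    by (simp add: power2_eq_square if_distrib cong: if_cong)
  finally have "(\<Sum>i<m 0. (\<Sum>k\<in>UNIV. V i k * x $ k)\<^sup>2) = (\<Sum>k\<in>UNIV. (x $ k)\<^sup>2)" .
  then show ?thesis by (simp add: vnorm_def norm_vec_def L2_set_def)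
qed

lemma layer_bound:
  assumes s: "0 < s" and K: "0 \<le> K" and hs: "\<And>z. \<bar>g z\<bar> \<le> K * \<bar>z\<bar>"
  shows "vnorm r (\<lambda>i. \<Sum>j<s. A i j * g (a j) / sqrt (real s)) \<le> spec_norm r s A * (K * vnorm s a / sqrt (real s))"
proof -
  have "vnorm r (\<lambda>i. \<Sum>j<s. A i j * g (a j) / sqrt (real s)) = vnorm r (\<lambda>i. \<Sum>j<s. A i j * (g (a j) / sqrt (real s)))"
    by simp
  also have "\<dots> \<le> spec_norm r s A * vnorm s (\<lambda>j. g (a j) / sqrt (real s))" by (rule spec_mult)
  also have "vnorm s (\<lambda>j. g (a j) / sqrt (real s)) = vnorm s (\<lambda>j. g (a j)) / sqrt (real s)"
    using s by (simp add: vnorm_div)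
  also have "vnorm s (\<lambda>j. g (a j)) \<le> vnorm s (\<lambda>j. K * a j)"
  proof (rule vnorm_le_sq)
    fix i
    have "\<bar>g (a i)\<bar> \<le> \<bar>K * a i\<bar>" using hs[of "a i"] K by (simp add: abs_mult)
    then show "(g (a i))\<^sup>2 \<le> (K * a i)\<^sup>2" using abs_le_square_iff by blast
  qed
  also have "vnorm s (\<lambda>j. K * a j) = K * vnorm s a" using K by (simp add: vnorm_scale)
  finally show ?thesis using s spec_nonneg by (simp add: mult_left_mono divide_right_mono)
qed

lemma spec_B:
  assumes "spec_norm r s A / sqrt (real s) \<le> B" "0 < s"
  shows "spec_norm r s A \<le> B * sqrt (real s)"
  using assms by (simp add: pos_divide_le_eq)

lemma fwd:
  fixes V :: "nat \<Rightarrow> 'd::finite \<Rightarrow> real"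
  assumes mpos: "\<forall>l\<le>L. 0 < m l"
    and hB: "\<forall>l\<le>L. spec_norm (m (Suc l)) (m l) (W l) / sqrt (real (m l)) \<le> B"
    and hK: "\<forall>l x. 1 \<le> l \<and> l \<le> L \<longrightarrow> \<bar>\<sigma> l x\<bar> \<le> K * \<bar>x\<bar>"
    and K0: "0 \<le> K" and B0: "0 \<le> B"
    and orth: "\<forall>k k'. (\<Sum>i<m 0. V i k * V i k') = (if k = k' then 1 else 0)"
  shows "1 \<le> l \<Longrightarrow> l \<le> L \<Longrightarrow> vnorm (m l) (net m \<sigma> W V l x) \<le> B * (B * K) ^ (l - 1) * sqrt (real (m 0)) * norm x"
proof (induction l)
  case 0 then show ?case by simp
next
  case (Suc l)
  show ?case
  proof (cases l)
    case 0
    have "vnorm (m 1) (net m \<sigma> W V 1 x) = vnorm (m (Suc 0)) (\<lambda>i. \<Sum>j<m 0. W 0 i j * net m \<sigma> W V 0 x j)"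
      by simp
    also have "\<dots> \<le> spec_norm (m (Suc 0)) (m 0) (W 0) * vnorm (m 0) (net m \<sigma> W V 0 x)" by (rule spec_mult)
    also have "vnorm (m 0) (net m \<sigma> W V 0 x) = norm x" using orth by (rule net_V_norm)
    also have "spec_norm (m (Suc 0)) (m 0) (W 0) \<le> B * sqrt (real (m 0))"
      using hB mpos by (intro spec_B) auto
    finally show ?thesis using 0 by (simp add: mult_right_mono)
  next
    case (Suc p)
    have l: "l = Suc p" "Suc l \<le> L" "l \<le> L" using Suc.prems Suc by auto
    have IH: "vnorm (m l) (net m \<sigma> W V l x) \<le> B * (B * K) ^ (l - 1) * sqrt (real (m 0)) * norm x"
      using Suc.IH l by auto
    have "vnorm (m (Suc l)) (net m \<sigma> W V (Suc l) x) =
       vnorm (m (Suc l)) (\<lambda>i. \<Sum>j<m l. W l i j * \<sigma> l (net m \<sigma> W V l x j) / sqrt (real (m l)))"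
      using l by simp
    also have "\<dots> \<le> spec_norm (m (Suc l)) (m l) (W l) * (K * vnorm (m l) (net m \<sigma> W V l x) / sqrt (real (m l)))"
      by (rule layer_bound) (use mpos l K0 hK in auto)
    also have "\<dots> \<le> (B * sqrt (real (m l))) * (K * vnorm (m l) (net m \<sigma> W V l x) / sqrt (real (m l)))"
      by (rule mult_right_mono) (use hB mpos l K0 in \<open>auto intro!: spec_B divide_nonneg_pos mult_nonneg_nonneg vnorm_nonneg\<close>)
    also have "\<dots> = B * K * vnorm (m l) (net m \<sigma> W V l x)"
    proof -
      have "0 < m l" using mpos l by auto
      then show ?thesis by simp
    qed
    also have "\<dots> \<le> B * K * (B * (B * K) ^ (l - 1) * sqrt (real (m 0)) * norm x)"
      using IH B0 K0 by (simp add: mult_left_mono)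
    also have "\<dots> = B * (B * K) ^ (Suc l - 1) * sqrt (real (m 0)) * norm x"
      using l by simp
    finally show ?thesis .
  qed
qed

definition yv :: "(nat \<Rightarrow> nat) \<Rightarrow> (nat \<Rightarrow> real \<Rightarrow> real) \<Rightarrow> (nat \<Rightarrow> nat \<Rightarrow> nat \<Rightarrow> real)
    \<Rightarrow> (nat \<Rightarrow> 'd::finite \<Rightarrow> real) \<Rightarrow> nat \<Rightarrow> real ^ 'd \<Rightarrow> nat \<Rightarrow> real" where
  "yv m \<sigma> W V L x = (if L = 1 then net m \<sigma> W V 0 x
     else (\<lambda>j. \<sigma> (L - 1) (net m \<sigma> W V (L - 1) x j) / sqrt (real (m (L - 1)))))"

lemma yv_form:
  assumes "1 \<le> L"
  shows "net m \<sigma> (W(L - 1 := \<theta>)) V L x i = (\<Sum>j<m (L - 1). \<theta> i j * yv m \<sigma> W V L x j)"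
proof (cases "L = 1")
  case True then show ?thesis by (simp add: yv_def)
next
  case False
  then obtain p where p: "L = Suc (Suc p)" using assms by (metis One_nat_def Suc_le_D le_SucE le_zero_eq nat.exhaust)
  have "net m \<sigma> (W(Suc p := \<theta>)) V (Suc p) x = net m \<sigma> W V (Suc p) x" by (rule net_cong) auto
  then show ?thesis using p by (simp add: yv_def)
qed

lemma yv_upd: "yv m \<sigma> (W(L - 1 := \<theta>)) V L x = yv m \<sigma> W V L x"
proof -
  have "net m \<sigma> (W(L - 1 := \<theta>)) V (L - 1) x = net m \<sigma> W V (L - 1) x" by (rule net_cong) auto
  then show ?thesis by (simp add: yv_def)
qed

lemma out_lip:
  assumes L: "1 \<le> L" and mL: "0 < m L" and K0: "0 \<le> K"
    and lip: "\<And>a b. \<bar>\<sigma> L a - \<sigma> L b\<bar> \<le> K * \<bar>a - b\<bar>"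
    and W1: "\<forall>j<m L. \<bar>W L 0 j\<bar> \<le> 1"
  shows "\<bar>net m \<sigma> (W(L - 1 := \<theta>2)) V (Suc L) x 0 - net m \<sigma> (W(L - 1 := \<theta>1)) V (Suc L) x 0\<bar>
     \<le> K * vnorm (m L) (\<lambda>i. \<Sum>j<m (L - 1). (\<theta>2 i j - \<theta>1 i j) * yv m \<sigma> W V L x j)"
proof -
  obtain p where p: "L = Suc p" using L by (cases L) auto
  define a where "a j = net m \<sigma> (W(L - 1 := \<theta>1)) V L x j" for j
  define b where "b j = net m \<sigma> (W(L - 1 := \<theta>2)) V L x j" for j
  have ba: "b j - a j = (\<Sum>k<m (L - 1). (\<theta>2 j k - \<theta>1 j k) * yv m \<sigma> W V L x k)" for j
  proof -
    have "a j = (\<Sum>k<m (L - 1). \<theta>1 j k * yv m \<sigma> W V L x k)" unfolding a_def by (rule yv_form[OF L])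
    moreover have "b j = (\<Sum>k<m (L - 1). \<theta>2 j k * yv m \<sigma> W V L x k)" unfolding b_def by (rule yv_form[OF L])
    ultimately show ?thesis by (simp add: sum_subtractf[symmetric] left_diff_distrib)
  qed
  have "net m \<sigma> (W(L - 1 := \<theta>2)) V (Suc L) x 0 - net m \<sigma> (W(L - 1 := \<theta>1)) V (Suc L) x 0
      = (\<Sum>j<m L. W L 0 j * (\<sigma> L (b j) - \<sigma> L (a j)) / sqrt (real (m L)))"
    unfolding a_def b_def using p by (simp add: sum_subtractf[symmetric] algebra_simps diff_divide_distrib)
  also have "\<bar>\<dots>\<bar> \<le> (\<Sum>j<m L. \<bar>W L 0 j * (\<sigma> L (b j) - \<sigma> L (a j)) / sqrt (real (m L))\<bar>)"
    by (rule sum_abs)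
  also have "\<dots> \<le> (\<Sum>j<m L. K * \<bar>b j - a j\<bar> / sqrt (real (m L)))"
  proof (rule sum_mono)
    fix j assume j: "j \<in> {..<m L}"
    have "\<bar>W L 0 j * (\<sigma> L (b j) - \<sigma> L (a j))\<bar> \<le> 1 * (K * \<bar>b j - a j\<bar>)"
      unfolding abs_mult by (rule mult_mono) (use W1 j lip in auto)
    then show "\<bar>W L 0 j * (\<sigma> L (b j) - \<sigma> L (a j)) / sqrt (real (m L))\<bar> \<le> K * \<bar>b j - a j\<bar> / sqrt (real (m L))"
      by (simp add: abs_divide divide_right_mono)
  qed
  also have "\<dots> = K * (\<Sum>j<m L. \<bar>b j - a j\<bar>) / sqrt (real (m L))"
    by (simp add: sum_distrib_left sum_divide_distrib)
  also have "\<dots> \<le> K * (sqrt (real (m L)) * vnorm (m L) (\<lambda>j. b j - a j)) / sqrt (real (m L))"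
    using mL K0 by (intro divide_right_mono mult_left_mono sum_abs_le) auto
  also have "\<dots> = K * vnorm (m L) (\<lambda>j. b j - a j)" using mL by simp
  finally show ?thesis by (simp add: ba)
qed



lemma sphere_prob: "prob_space (sphere_measure :: (real ^ 'd::finite) measure)"
  unfolding sphere_measure_def
proof (rule prob_space.prob_space_distr)
  show "prob_space (uniform_measure lborel (ball (0::real^'d) 1))"
  proof (rule prob_space_uniform_measure)
    have "unit_ball_vol (real CARD('d)) > 0" by simp
    then show "emeasure lborel (ball (0::real^'d) 1) \<noteq> 0"
      by (simp add: emeasure_ball) (smt (verit) of_nat_0_le_iff unit_ball_vol_pos)
  qed (simp add: emeasure_ball)
  have "(\<lambda>x::real^'d. x /\<^sub>R norm x) \<in> borel_measurable borel" by measurable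
  then show "(\<lambda>x::real^'d. x /\<^sub>R norm x) \<in> uniform_measure lborel (ball 0 1) \<rightarrow>\<^sub>M borel"
    by (simp add: measurable_cong_sets[OF sets_uniform_measure refl])
qed

lemma sphere_meas: "g \<in> borel_measurable borel \<Longrightarrow> g \<in> borel_measurable (sphere_measure :: (real ^ 'd::finite) measure)"
  by (simp add: sphere_measure_def)

lemma sphere_AE: "AE x in (sphere_measure :: (real ^ 'd::finite) measure). norm x \<le> 1"
  unfolding sphere_measure_def
proof (subst AE_distr_iff)
  have "(\<lambda>x::real^'d. x /\<^sub>R norm x) \<in> borel_measurable borel" by measurable
  then show "(\<lambda>x::real^'d. x /\<^sub>R norm x) \<in> uniform_measure lborel (ball 0 1) \<rightarrow>\<^sub>M borel"
    by (simp add: measurable_cong_sets[OF sets_uniform_measure refl])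
  show "{x \<in> space borel. norm (x::real^'d) \<le> 1} \<in> sets borel" by measurable
  show "AE x in uniform_measure lborel (ball 0 1). norm (x /\<^sub>R norm (x::real^'d)) \<le> 1"
  proof (rule AE_I2)
    fix x :: "real^'d"
    show "norm (x /\<^sub>R norm x) \<le> 1" by (cases "x = 0") auto
  qed
qed

lemma lip_cont:
  fixes g :: "real \<Rightarrow> real"
  assumes "\<And>x y. \<bar>g x - g y\<bar> \<le> K * \<bar>x - y\<bar>"
  shows "continuous_on UNIV g"
proof -
  have "\<bar>g 1 - g 0\<bar> \<le> K" using assms[of 1 0] by simp
  then have K: "0 \<le> K" by (meson abs_ge_zero order_trans)
  have "K-lipschitz_on UNIV g"
    by (rule lipschitz_onI) (use assms K in \<open>auto simp: dist_real_def\<close>)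
  then show ?thesis by (rule lipschitz_on_continuous_on)
qed

lemma net_cont:
  fixes V :: "nat \<Rightarrow> 'd::finite \<Rightarrow> real"
  assumes sc: "\<forall>l. 1 \<le> l \<and> l \<le> L \<longrightarrow> continuous_on UNIV (\<sigma> l)"
  shows "l \<le> Suc L \<Longrightarrow> continuous_on UNIV (\<lambda>x. net m \<sigma> W V l x i)"
proof (induction l arbitrary: i rule: less_induct)
  case (less l)
  show ?case
  proof (cases l)
    case 0
    have "continuous_on UNIV (\<lambda>x::real^'d. x $ k)" for k by (rule continuous_on_component[OF continuous_on_id])
    then show ?thesis using 0 by (auto intro!: continuous_on_sum continuous_on_mult_left)
  next
    case (Suc q)
    show ?thesis
    proof (cases q)
      case 0
      have "continuous_on UNIV (\<lambda>x. net m \<sigma> W V 0 x j)" for j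
        using less.IH[of 0 j] \<open>l = Suc q\<close> 0 by simp
      then show ?thesis using Suc 0 by (auto intro!: continuous_intros)
    next
      case (Suc p)
      have c1: "continuous_on UNIV (\<lambda>x. net m \<sigma> W V (Suc p) x j)" for j
        using less \<open>l = Suc q\<close> Suc by auto
      have c2: "continuous_on UNIV (\<sigma> (Suc p))" using sc less.prems \<open>l = Suc q\<close> Suc by auto
      have "continuous_on UNIV (\<lambda>x. \<sigma> (Suc p) (net m \<sigma> W V (Suc p) x j))" for j
        by (rule continuous_on_compose2[OF c2 c1]) auto
      then show ?thesis using \<open>l = Suc q\<close> Suc by (auto intro!: continuous_intros)
    qed
  qed
qed

lemma integrable_sq:
  fixes N f :: "real ^ 'd::finite \<Rightarrow> real"
  assumes N: "continuous_on UNIV N" and f: "f \<in> borel_measurable borel"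
    and fi: "integrable sphere_measure (\<lambda>x. (f x)\<^sup>2)"
  shows "integrable sphere_measure (\<lambda>x. (N x - f x)\<^sup>2)"
proof -
  interpret prob_space "sphere_measure :: (real ^ 'd) measure" by (rule sphere_prob)
  have "compact (N ` cball 0 1)" by (rule compact_continuous_image) (use N continuous_on_subset in auto)
  then obtain R where R: "\<forall>y\<in>N ` cball 0 1. norm y \<le> R" using compact_imp_bounded bounded_iff by metis
  show ?thesis
  proof (rule Bochner_Integration.integrable_bound[where f="\<lambda>x. 2 * R\<^sup>2 + 2 * (f x)\<^sup>2"])
    show "integrable sphere_measure (\<lambda>x. 2 * R\<^sup>2 + 2 * (f x)\<^sup>2)" using fi by auto
    have "N \<in> borel_measurable borel" using N by (rule borel_measurable_continuous_onI)
    then show "(\<lambda>x. (N x - f x)\<^sup>2) \<in> borel_measurable sphere_measure"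
      using f by (intro sphere_meas) measurable
    show "AE x in sphere_measure. norm ((N x - f x)\<^sup>2) \<le> norm (2 * R\<^sup>2 + 2 * (f x)\<^sup>2)"
      using sphere_AE
    proof (rule AE_mp, intro AE_I2 impI)
      fix x :: "real^'d" assume "norm x \<le> 1"
      then have "\<bar>N x\<bar> \<le> R" using R by auto
      moreover have "0 \<le> \<bar>N x\<bar>" by simp
      ultimately have "\<bar>N x\<bar> \<le> \<bar>R\<bar>" by linarith
      then have "(N x)\<^sup>2 \<le> R\<^sup>2" by (simp add: abs_le_square_iff)
      moreover have "(N x - f x)\<^sup>2 \<le> 2 * (N x)\<^sup>2 + 2 * (f x)\<^sup>2"
      proof -
        have "(N x - f x)\<^sup>2 + (N x + f x)\<^sup>2 = 2 * (N x)\<^sup>2 + 2 * (f x)\<^sup>2"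
          by (simp add: power2_eq_square algebra_simps)
        moreover have "0 \<le> (N x + f x)\<^sup>2" by simp
        ultimately show ?thesis by linarith
      qed
      ultimately show "norm ((N x - f x)\<^sup>2) \<le> norm (2 * R\<^sup>2 + 2 * (f x)\<^sup>2)" by simp
    qed
  qed
qed



lemma act_bound:
  assumes s: "0 < s" and K: "0 \<le> K" and hs: "\<And>z. \<bar>g z\<bar> \<le> K * \<bar>z\<bar>"
  shows "vnorm s (\<lambda>j. g (a j) / sqrt (real s)) \<le> K * vnorm s a / sqrt (real s)"
proof -
  have "vnorm s (\<lambda>j. g (a j) / sqrt (real s)) = vnorm s (\<lambda>j. g (a j)) / sqrt (real s)"
    using s by (simp add: vnorm_div)
  also have "vnorm s (\<lambda>j. g (a j)) \<le> vnorm s (\<lambda>j. K * a j)"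
  proof (rule vnorm_le_sq)
    fix i
    have "\<bar>g (a i)\<bar> \<le> \<bar>K * a i\<bar>" using hs[of "a i"] K by (simp add: abs_mult)
    then show "(g (a i))\<^sup>2 \<le> (K * a i)\<^sup>2" using abs_le_square_iff by blast
  qed
  also have "vnorm s (\<lambda>j. K * a j) = K * vnorm s a" using K by (simp add: vnorm_scale)
  finally show ?thesis using s by (simp add: divide_right_mono)
qed

lemma diff_cancel_abs: "\<bar>(a - c) - (b - c)\<bar> = \<bar>a - (b::real)\<bar>"
  by simp

lemma main_lemma:
  fixes m :: "nat \<Rightarrow> nat" and \<sigma> :: "nat \<Rightarrow> real \<Rightarrow> real" and W :: "nat \<Rightarrow> nat \<Rightarrow> nat \<Rightarrow> real"
    and V :: "nat \<Rightarrow> 'd::finite \<Rightarrow> real" and f :: "real ^ 'd \<Rightarrow> real" and \<gamma> :: real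
    and \<theta> :: "nat \<Rightarrow> nat \<Rightarrow> nat \<Rightarrow> real" and G :: "nat \<Rightarrow> nat \<Rightarrow> nat \<Rightarrow> real"
    and L :: nat and K c B :: real
  assumes L: "L \<ge> 1"
   and mpos: "\<forall>l\<le>Suc L. m l > 0" and m1: "m (Suc L) = 1"
   and hc: "\<forall>l\<le>L. real (m l) \<le> c * real (m 0) \<and> real (m 0) \<le> c * real (m l)"
   and orth: "\<forall>k k'. (\<Sum>i<m 0. V i k * V i k') = (if k = k' then 1 else 0)"
   and hW: "\<forall>j<m L. W L 0 j \<in> {-1, 1}"
   and hK: "\<forall>l x. 1 \<le> l \<and> l \<le> L \<longrightarrow> \<bar>\<sigma> l x\<bar> \<le> K * \<bar>x\<bar>"
   and hLip: "\<forall>l x y. 1 \<le> l \<and> l \<le> L \<longrightarrow> \<bar>\<sigma> l x - \<sigma> l y\<bar> \<le> K * \<bar>x - y\<bar>"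
   and fm: "f \<in> borel_measurable borel" and fi: "integrable sphere_measure (\<lambda>x. (f x)\<^sup>2)"
   and grad: "\<forall>n. is_gradient m \<sigma> W V L f (\<theta> n) (G n)"
   and step: "\<forall>n i j. \<theta> (Suc n) i j = \<theta> n i j - \<gamma> * G n i j"
   and hB: "\<forall>n. \<forall>l\<le>L. spec_norm (m (Suc l)) (m l) ((W(L - 1 := \<theta> n)) l) / sqrt (real (m l)) \<le> B"
  shows "\<forall>n. spec_norm (m L) (m (L - 1)) (G n)
              \<le> (K * (if L = 1 then 1 else K * B * (B * K) ^ (L - 2) * sqrt c)) * L2norm (\<lambda>x. net_out m \<sigma> W V L (\<theta> n) x - f x)"
proof
  fix n
  define A where "A = (if L = 1 then 1 else K * B * (B * K) ^ (L - 2) * sqrt c)"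
  define W' where "W' = W(L - 1 := \<theta> n)"
  have mposL: "\<forall>l\<le>L. 0 < m l" using mpos by auto
  have "\<bar>\<sigma> 1 1\<bar> \<le> K * \<bar>1\<bar>" using hK L by blast
  then have "\<bar>\<sigma> 1 1\<bar> \<le> K" by simp
  then have K0: "0 \<le> K" by (meson abs_ge_zero order_trans)
  have hBn: "\<forall>l\<le>L. spec_norm (m (Suc l)) (m l) (W' l) / sqrt (real (m l)) \<le> B"
    using hB unfolding W'_def by blast
  have "0 \<le> spec_norm (m (Suc 0)) (m 0) (W' 0) / sqrt (real (m 0))"
    by (simp add: spec_nonneg)
  then have B0: "0 \<le> B" using hBn by fastforce
  have c0: "0 \<le> c"
  proof (rule ccontr)
    assume "\<not> 0 \<le> c"
    moreover have "0 < real (m 0)" using mpos by auto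
    ultimately have "c * real (m 0) < 0" by (simp add: mult_neg_pos)
    moreover have "real (m 0) \<le> c * real (m 0)" using hc by auto
    ultimately show False using \<open>0 < real (m 0)\<close> by linarith
  qed
  have A0: "0 \<le> A" unfolding A_def using K0 B0 c0 by simp
  have ybound: "vnorm (m (L - 1)) (yv m \<sigma> W V L x) \<le> A * norm x" for x
  proof (cases "L = 1")
    case True
    then show ?thesis using net_V_norm[where m=m and V=V, OF orth] by (simp add: yv_def A_def)
  next
    case False
    define q where "q = L - 1"
    have q: "1 \<le> q" "q \<le> L" "Suc q = L" "q - 1 = L - 2" using False L unfolding q_def by auto
    have mq: "0 < m q" using mpos q by auto
    have "yv m \<sigma> W V L x = yv m \<sigma> W' V L x" unfolding W'_def by (rule yv_upd[symmetric])
    also have "\<dots> = (\<lambda>j. \<sigma> q (net m \<sigma> W' V q x j) / sqrt (real (m q)))"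
      using False by (simp add: yv_def q_def)
    finally have "vnorm (m (L - 1)) (yv m \<sigma> W V L x) = vnorm (m q) (\<lambda>j. \<sigma> q (net m \<sigma> W' V q x j) / sqrt (real (m q)))"
      by (simp add: q_def)
    also have "\<dots> \<le> K * vnorm (m q) (net m \<sigma> W' V q x) / sqrt (real (m q))"
      by (rule act_bound) (use mq K0 hK q in auto)
    also have "\<dots> \<le> K * (B * (B * K) ^ (q - 1) * sqrt (real (m 0)) * norm x) / sqrt (real (m q))"
      using fwd[OF mposL hBn hK K0 B0 orth q(1) q(2), of x] K0 by (intro divide_right_mono mult_left_mono) auto
    also have "\<dots> = (K * B * (B * K) ^ (q - 1) * norm x) * (sqrt (real (m 0)) / sqrt (real (m q)))"
      by simp
    also have "\<dots> \<le> (K * B * (B * K) ^ (q - 1) * norm x) * sqrt c"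
    proof (rule mult_left_mono)
      have "sqrt (real (m 0)) \<le> sqrt (c * real (m q))" using hc q by auto
      also have "\<dots> = sqrt c * sqrt (real (m q))" by (simp add: real_sqrt_mult)
      finally show "sqrt (real (m 0)) / sqrt (real (m q)) \<le> sqrt c" using mq by (simp add: pos_divide_le_eq)
      show "0 \<le> K * B * (B * K) ^ (q - 1) * norm x" using K0 B0 by simp
    qed
    also have "\<dots> = A * norm x" using False q by (simp add: A_def)
    finally show ?thesis .
  qed
  have L2: "0 \<le> L2norm (\<lambda>x. net_out m \<sigma> W V L (\<theta> n) x - f x)"
    unfolding L2norm_def by (simp add: Bochner_Integration.integral_nonneg)
  have sc: "\<forall>l. 1 \<le> l \<and> l \<le> L \<longrightarrow> continuous_on UNIV (\<sigma> l)"
  proof (intro allI impI)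
    fix l assume "1 \<le> l \<and> l \<le> L"
    then show "continuous_on UNIV (\<sigma> l)" by (intro lip_cont[of _ K]) (use hLip in blast)
  qed
  have cont: "continuous_on UNIV (\<lambda>x. net_out m \<sigma> W V L \<theta>' x)" for \<theta>'
    unfolding net_out_def by (rule net_cont[OF sc]) simp
  show "spec_norm (m L) (m (L - 1)) (G n) \<le> (K * A) * L2norm (\<lambda>x. net_out m \<sigma> W V L (\<theta> n) x - f x)"
  proof (rule spec_least)
    fix v assume v: "vnorm (m (L - 1)) v \<le> 1"
    define w where "w = (\<lambda>i. \<Sum>j<m (L - 1). G n i j * v j)"
    define s where "s = vnorm (m L) w"
    show "vnorm (m L) (\<lambda>i. \<Sum>j<m (L - 1). G n i j * v j) \<le> (K * A) * L2norm (\<lambda>x. net_out m \<sigma> W V L (\<theta> n) x - f x)"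
    proof (cases "s = 0")
      case True then show ?thesis using L2 K0 A0 unfolding s_def w_def by simp
    next
      case False
      then have s0: "0 < s" using vnorm_nonneg s_def by (metis less_eq_real_def)
      define Hm where "Hm = (\<lambda>i j. w i / s * v j)"
      define F where "F = (\<lambda>t x. net_out m \<sigma> W V L (\<lambda>i j. \<theta> n i j + t * Hm i j) x - f x)"
      have sumGH: "(\<Sum>i<m L. \<Sum>j<m (L - 1). G n i j * Hm i j) = s"
      proof -
        have "(\<Sum>j<m (L - 1). G n i j * Hm i j) = (w i)\<^sup>2 / s" for i
        proof -
          have "(\<Sum>j<m (L - 1). G n i j * Hm i j) = (\<Sum>j<m (L - 1). w i / s * (G n i j * v j))"
            by (rule sum.cong) (simp_all add: Hm_def algebra_simps)
          also have "\<dots> = w i / s * (\<Sum>j<m (L - 1). G n i j * v j)" by (rule sum_distrib_left[symmetric])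
          also have "\<dots> = (w i)\<^sup>2 / s" by (simp add: w_def power2_eq_square)
          finally show ?thesis .
        qed
        then have "(\<Sum>i<m L. \<Sum>j<m (L - 1). G n i j * Hm i j) = (\<Sum>i<m L. (w i)\<^sup>2 / s)"
          by simp
        also have "\<dots> = (\<Sum>i<m L. (w i)\<^sup>2) / s" by (rule sum_divide_distrib[symmetric])
        also have "\<dots> = s\<^sup>2 / s" by (simp add: s_def vnorm_sq)
        also have "\<dots> = s" using s0 by (simp add: power2_eq_square)
        finally show ?thesis .
      qed
      have "((\<lambda>t. loss m \<sigma> W V L f (\<lambda>i j. \<theta> n i j + t * Hm i j)) has_real_derivative
             (\<Sum>i<m L. \<Sum>j<m (L - 1). G n i j * Hm i j)) (at 0)"
        using grad unfolding is_gradient_def by blast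
      then have D: "((\<lambda>t. 1/2 * (sqrt (\<integral>x. (F t x)\<^sup>2 \<partial>sphere_measure))\<^sup>2) has_real_derivative s) (at 0)"
        unfolding sumGH by (simp add: loss_def L2norm_def F_def)
      have F0: "F 0 = (\<lambda>x. net_out m \<sigma> W V L (\<theta> n) x - f x)" by (simp add: F_def)
      have meas: "F t \<in> borel_measurable sphere_measure" for t
        unfolding F_def
        by (intro sphere_meas borel_measurable_diff borel_measurable_continuous_onI cont fm)
      have int: "integrable sphere_measure (\<lambda>x. (F t x)\<^sup>2)" for t
        unfolding F_def by (rule integrable_sq[OF cont fm fi])
      have lipL: "\<bar>\<sigma> L a - \<sigma> L b\<bar> \<le> K * \<bar>a - b\<bar>" for a b using hLip L by blast
      have W1: "\<forall>j<m L. \<bar>W L 0 j\<bar> \<le> 1" using hW by auto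
      have lip: "AE x in sphere_measure. \<bar>F t x - F 0 x\<bar> \<le> \<bar>t\<bar> * (K * A)" for t
        using sphere_AE
      proof (rule AE_mp, intro AE_I2 impI)
        fix x :: "real ^ 'd" assume nx: "norm x \<le> 1"
        define y where "y = yv m \<sigma> W V L x"
        have e1: "\<bar>F t x - F 0 x\<bar> = \<bar>net m \<sigma> (W(L - 1 := (\<lambda>i j. \<theta> n i j + t * Hm i j))) V (Suc L) x 0
               - net m \<sigma> (W(L - 1 := (\<lambda>i j. \<theta> n i j + 0 * Hm i j))) V (Suc L) x 0\<bar>"
          unfolding F_def net_out_def by (rule diff_cancel_abs)
        have e2: "\<dots> \<le> K * vnorm (m L) (\<lambda>i. \<Sum>j<m (L - 1). ((\<theta> n i j + t * Hm i j) - (\<theta> n i j + 0 * Hm i j)) * y j)"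
          unfolding y_def by (rule out_lip[where m=m and \<sigma>=\<sigma> and W=W and L=L and K=K, OF L _ K0 lipL W1]) (use mpos in auto)
        have e3: "(\<lambda>i. \<Sum>j<m (L - 1). ((\<theta> n i j + t * Hm i j) - (\<theta> n i j + 0 * Hm i j)) * y j)
            = (\<lambda>i. (t / s * (\<Sum>j<m (L - 1). v j * y j)) * w i)"
        proof
          fix i
          have "(\<Sum>j<m (L - 1). ((\<theta> n i j + t * Hm i j) - (\<theta> n i j + 0 * Hm i j)) * y j)
              = (\<Sum>j<m (L - 1). (t / s * w i) * (v j * y j))"
            by (rule sum.cong) (simp_all add: Hm_def algebra_simps)
          also have "\<dots> = (t / s * w i) * (\<Sum>j<m (L - 1). v j * y j)" by (rule sum_distrib_left[symmetric])
          also have "\<dots> = (t / s * (\<Sum>j<m (L - 1). v j * y j)) * w i" by simp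
          finally show "(\<Sum>j<m (L - 1). ((\<theta> n i j + t * Hm i j) - (\<theta> n i j + 0 * Hm i j)) * y j)
              = (t / s * (\<Sum>j<m (L - 1). v j * y j)) * w i" .
        qed
        have "vnorm (m L) (\<lambda>i. (t / s * (\<Sum>j<m (L - 1). v j * y j)) * w i) = \<bar>t / s * (\<Sum>j<m (L - 1). v j * y j)\<bar> * s"
          unfolding s_def by (rule vnorm_scale)
        also have "\<dots> = \<bar>t\<bar> * \<bar>\<Sum>j<m (L - 1). v j * y j\<bar>" using s0 by (simp add: abs_mult abs_divide)
        also have "\<dots> \<le> \<bar>t\<bar> * A"
        proof (rule mult_left_mono)
          have "\<bar>\<Sum>j<m (L - 1). v j * y j\<bar> \<le> vnorm (m (L - 1)) v * vnorm (m (L - 1)) y" by (rule CS)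
          also have "\<dots> \<le> 1 * (A * norm x)"
            using v ybound[of x] unfolding y_def by (intro mult_mono) (auto simp: vnorm_nonneg)
          also have "\<dots> \<le> A" using nx A0 by (simp add: mult_left_le)
          finally show "\<bar>\<Sum>j<m (L - 1). v j * y j\<bar> \<le> A" .
        qed simp
        finally have vb: "vnorm (m L) (\<lambda>i. (t / s * (\<Sum>j<m (L - 1). v j * y j)) * w i) \<le> \<bar>t\<bar> * A" .
        have "\<bar>F t x - F 0 x\<bar> \<le> K * (\<bar>t\<bar> * A)"
        proof -
          have "K * vnorm (m L) (\<lambda>i. \<Sum>j<m (L - 1). ((\<theta> n i j + t * Hm i j) - (\<theta> n i j + 0 * Hm i j)) * y j) \<le> K * (\<bar>t\<bar> * A)"
            unfolding e3 by (rule mult_left_mono[OF vb K0])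
          then show ?thesis using e1 e2 by linarith
        qed
        then show "\<bar>F t x - F 0 x\<bar> \<le> \<bar>t\<bar> * (K * A)" by (simp add: ac_simps)
      qed
      have "\<bar>s\<bar> \<le> (K * A) * sqrt (\<integral>x. (F 0 x)\<^sup>2 \<partial>sphere_measure)"
        by (rule deriv_bound[OF sphere_prob meas int lip _ D]) (use K0 A0 in simp)
      then show ?thesis unfolding F0 s_def w_def L2norm_def by simp
    qed
  qed
qed

theorem lemma5p3:
  fixes L :: nat and K c B :: real
  assumes "L \<ge> 1"
  shows "\<exists>C. \<forall>(m :: nat \<Rightarrow> nat) (\<sigma> :: nat \<Rightarrow> real \<Rightarrow> real) (W :: nat \<Rightarrow> nat \<Rightarrow> nat \<Rightarrow> real)
            (V :: nat \<Rightarrow> 'd::finite \<Rightarrow> real) (f :: real ^ 'd \<Rightarrow> real) (\<gamma> :: real)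
            (\<theta> :: nat \<Rightarrow> nat \<Rightarrow> nat \<Rightarrow> real) (G :: nat \<Rightarrow> nat \<Rightarrow> nat \<Rightarrow> real).
     (\<forall>l\<le>Suc L. m l > 0) \<and> m (Suc L) = 1 \<and>
     (\<forall>l\<le>L. real (m l) \<le> c * real (m 0) \<and> real (m 0) \<le> c * real (m l)) \<and>
     (\<forall>k k'. (\<Sum>i<m 0. V i k * V i k') = (if k = k' then 1 else 0)) \<and>
     (\<forall>j<m L. W L 0 j \<in> {-1, 1}) \<and>
     (\<forall>l x. 1 \<le> l \<and> l \<le> L \<longrightarrow> \<bar>\<sigma> l x\<bar> \<le> K * \<bar>x\<bar>) \<and>
     (\<forall>l x y. 1 \<le> l \<and> l \<le> L \<longrightarrow> \<bar>\<sigma> l x - \<sigma> l y\<bar> \<le> K * \<bar>x - y\<bar>) \<and>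
     f \<in> borel_measurable borel \<and> integrable sphere_measure (\<lambda>x. (f x)\<^sup>2) \<and>
     (\<forall>n. is_gradient m \<sigma> W V L f (\<theta> n) (G n)) \<and>
     (\<forall>n i j. \<theta> (Suc n) i j = \<theta> n i j - \<gamma> * G n i j) \<and>
     (\<forall>n. \<forall>l\<le>L. spec_norm (m (Suc l)) (m l) ((W(L - 1 := \<theta> n)) l) / sqrt (real (m l)) \<le> B)
     \<longrightarrow> (\<forall>n. spec_norm (m L) (m (L - 1)) (G n)
              \<le> C * L2norm (\<lambda>x. net_out m \<sigma> W V L (\<theta> n) x - f x))"
    apply (rule exI[of _ "K * (if L = 1 then 1 else K * B * (B * K) ^ (L - 2) * sqrt c)"])
  apply (intro allI)
  apply (rule impI)
  apply (elim conjE)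
  apply (rule main_lemma[OF assms])
               apply assumption+
  done

end
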